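(* Let $U,V,W$ be Hermitian spaces with $U$ finite-dimensional, $D\in\mathrm{Hom}(U,V)$ linear, and $\rho:V\times U^*\to W$ bilinear. Then $$\|\mathrm{Tr}_\rho D\|_W\le\sqrt{\mathrm{rank}(D)}\,\|\rho\|\,\|D\|.$$
   Context: $\mathrm{Tr}_\rho D=\sum_i\rho(Du_i,u^i)\in W$ for a basis $\{u_i\}$ of $U$ with dual basis $\{u^i\}$ of $U^*$ (independent of the basis). $U^*$ carries the dual Hermitian structure. $\|\rho\|=\sup\{\|\rho(v,\alpha)\|_W:\|v\|_V=1,\|\alpha\|_{U^*}=1\}$, and $\|D\|=\big(\sum_i\|Du_i\|_V^2\big)^{1/2}$ for an orthonormal basis $\{u_i\}$ of $U$ (Hilbert–Schmidt norm). *)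

theory Defs
  imports "HOL-Analysis.Analysis" "HOL-Library.Extended_Nonnegative_Real"
begin

class complex_vector = ab_group_add +
  fixes scaleC :: "complex \<Rightarrow> 'a \<Rightarrow> 'a" (infixr "*\<^sub>C" 75)
  assumes scaleC_add_right: "a *\<^sub>C (x + y) = a *\<^sub>C x + a *\<^sub>C y"
    and scaleC_add_left: "(a + b) *\<^sub>C x = a *\<^sub>C x + b *\<^sub>C x"
    and scaleC_scaleC: "a *\<^sub>C (b *\<^sub>C x) = (a * b) *\<^sub>C x"
    and scaleC_one: "1 *\<^sub>C x = x"

class hermitian_space = complex_vector +
  fixes cinner :: "'a \<Rightarrow> 'a \<Rightarrow> complex"
    and hnorm :: "'a \<Rightarrow> real"
  assumes cinner_conj_sym: "cinner x y = cnj (cinner y x)"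
    and cinner_add_left: "cinner (x + y) z = cinner x z + cinner y z"
    and cinner_scaleC_left: "cinner (a *\<^sub>C x) y = a * cinner x y"
    and cinner_pos: "x \<noteq> 0 \<Longrightarrow> Re (cinner x x) > 0"
    and norm_cinner: "hnorm x = sqrt (Re (cinner x x))"

definition clinear :: "('a::complex_vector \<Rightarrow> 'b::complex_vector) \<Rightarrow> bool" where
  "clinear f \<longleftrightarrow> (\<forall>x y. f (x + y) = f x + f y) \<and> (\<forall>a x. f (a *\<^sub>C x) = a *\<^sub>C f x)"

definition cfunctional :: "('a::complex_vector \<Rightarrow> complex) \<Rightarrow> bool" where
  "cfunctional f \<longleftrightarrow> (\<forall>x y. f (x + y) = f x + f y) \<and> (\<forall>a x. f (a *\<^sub>C x) = a * f x)"

definition cspan :: "'a::complex_vector set \<Rightarrow> 'a set" where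
  "cspan S = {x. \<exists>F c. finite F \<and> F \<subseteq> S \<and> x = (\<Sum>v\<in>F. c v *\<^sub>C v)}"

definition cindependent :: "'a::complex_vector set \<Rightarrow> bool" where
  "cindependent S \<longleftrightarrow> (\<forall>F c. finite F \<and> F \<subseteq> S \<and> (\<Sum>v\<in>F. c v *\<^sub>C v) = 0 \<longrightarrow> (\<forall>v\<in>F. c v = 0))"

definition cfinite_dim :: "'a::complex_vector set \<Rightarrow> bool" where
  "cfinite_dim S \<longleftrightarrow> (\<exists>F. finite F \<and> S \<subseteq> cspan F)"

definition cbasis :: "'a::complex_vector set \<Rightarrow> bool" where
  "cbasis B \<longleftrightarrow> finite B \<and> cindependent B \<and> cspan B = UNIV"

definition cdim :: "'a::complex_vector set \<Rightarrow> nat" where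
  "cdim S = (LEAST n. \<exists>F. finite F \<and> card F = n \<and> S \<subseteq> cspan F)"

definition crank :: "('a::complex_vector \<Rightarrow> 'b::complex_vector) \<Rightarrow> nat" where
  "crank D = cdim (range D)"

text \<open>Dual basis element: the coordinate functional of b w.r.t. the basis B.\<close>
definition dual_elem :: "'a::complex_vector set \<Rightarrow> 'a \<Rightarrow> ('a \<Rightarrow> complex)" where
  "dual_elem B b = (\<lambda>x. (THE c. c \<in> B \<rightarrow>\<^sub>E UNIV \<and> x = (\<Sum>v\<in>B. c v *\<^sub>C v)) b)"

text \<open>\<open>Tr_\<rho> D = \<Sum>_i \<rho>(D u_i, u^i)\<close> for some (any) basis.\<close>
definition rho_trace :: "('v \<Rightarrow> ('u::complex_vector \<Rightarrow> complex) \<Rightarrow> 'w::complex_vector)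
    \<Rightarrow> ('u \<Rightarrow> 'v) \<Rightarrow> 'w" where
  "rho_trace \<rho> D = (let B = SOME B. cbasis B in \<Sum>b\<in>B. \<rho> (D b) (dual_elem B b))"

definition corthonormal_basis :: "'a::hermitian_space set \<Rightarrow> bool" where
  "corthonormal_basis B \<longleftrightarrow> finite B \<and> cspan B = UNIV \<and>
     (\<forall>b\<in>B. \<forall>b'\<in>B. cinner b b' = (if b = b' then 1 else 0))"

text \<open>Hilbert--Schmidt norm, via some (any) orthonormal basis of U.\<close>
definition hs_norm :: "('u::hermitian_space \<Rightarrow> 'v::hermitian_space) \<Rightarrow> real" where
  "hs_norm D = (let B = SOME B. corthonormal_basis B in sqrt (\<Sum>b\<in>B. (hnorm (D b))\<^sup>2))"

definition dual_norm :: "('u::hermitian_space \<Rightarrow> complex) \<Rightarrow> ennreal" where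
  "dual_norm \<alpha> = (SUP u\<in>{u. hnorm u = 1}. ennreal (cmod (\<alpha> u)))"

definition cbilinear :: "('v::complex_vector \<Rightarrow> ('u::complex_vector \<Rightarrow> complex) \<Rightarrow> 'w::complex_vector) \<Rightarrow> bool" where
  "cbilinear \<rho> \<longleftrightarrow>
     (\<forall>\<alpha>. cfunctional \<alpha> \<longrightarrow> clinear (\<lambda>v. \<rho> v \<alpha>)) \<and>
     (\<forall>v \<alpha> \<beta>. cfunctional \<alpha> \<and> cfunctional \<beta> \<longrightarrow> \<rho> v (\<lambda>x. \<alpha> x + \<beta> x) = \<rho> v \<alpha> + \<rho> v \<beta>) \<and>
     (\<forall>v a \<alpha>. cfunctional \<alpha> \<longrightarrow> \<rho> v (\<lambda>x. a * \<alpha> x) = a *\<^sub>C \<rho> v \<alpha>)"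

text \<open>\<open>\<parallel>\<rho>\<parallel>\<close> as an extended nonnegative real (may be infinite if V is infinite-dimensional).\<close>
definition rho_norm :: "('v::hermitian_space \<Rightarrow> ('u::hermitian_space \<Rightarrow> complex) \<Rightarrow> 'w::hermitian_space) \<Rightarrow> ennreal" where
  "rho_norm \<rho> = (SUP p\<in>{(v, \<alpha>). hnorm v = 1 \<and> cfunctional \<alpha> \<and> dual_norm \<alpha> = 1}.
                    ennreal (hnorm (\<rho> (fst p) (snd p))))"

end

theory Submission
  imports Defs
begin


interpretation cv: module "scaleC :: complex \<Rightarrow> 'a \<Rightarrow> 'a::complex_vector"
  by standard (simp_all add: scaleC_add_right scaleC_add_left scaleC_scaleC scaleC_one)

lemma cspan_eq: "cspan S = cv.span S"
  unfolding cspan_def cv.span_explicit by auto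

lemma cindependent_eq: "cindependent S \<longleftrightarrow> \<not> cv.dependent S"
  unfolding cindependent_def cv.dependent_explicit by blast

context begin
lemma cinner_zero_left[simp]: "cinner 0 y = 0"
  using cinner_add_left[of 0 0 y] by simp
lemma cinner_zero_right[simp]: "cinner x 0 = 0"
  using cinner_conj_sym[of x 0] by simp
lemma cinner_add_right: "cinner x (y + z) = cinner x y + cinner x z"
  by (metis cinner_add_left cinner_conj_sym complex_cnj_add)
lemma cinner_scaleC_right: "cinner x (a *\<^sub>C y) = cnj a * cinner x y"
  by (metis cinner_conj_sym cinner_scaleC_left complex_cnj_mult)
lemma cinner_minus_left: "cinner (- x) y = - cinner x y"
proof -
  have "cinner x y + cinner (-x) y = 0" using cinner_add_left[of x "-x" y] by simp
  then show ?thesis by (simp add: eq_neg_iff_add_eq_0 add.commute)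
qed
lemma cinner_diff_left: "cinner (x - y) z = cinner x z - cinner y z"
  using cinner_add_left[of x "-y" z] cinner_minus_left[of y z] by simp
lemma cinner_diff_right: "cinner x (y - z) = cinner x y - cinner x z"
  by (metis cinner_conj_sym cinner_diff_left complex_cnj_diff)
lemma cinner_sum_left: "cinner (\<Sum>i\<in>A. f i) y = (\<Sum>i\<in>A. cinner (f i) y)"
  by (induction A rule: infinite_finite_induct) (auto simp: cinner_add_left)
lemma cinner_sum_right: "cinner y (\<Sum>i\<in>A. f i) = (\<Sum>i\<in>A. cinner y (f i))"
  by (induction A rule: infinite_finite_induct) (auto simp: cinner_add_right)
lemma cinner_self_Im: "Im (cinner x x) = 0"
  using cinner_conj_sym[of x x] by (metis cnj.sel(2) neg_equal_zero)
lemma cinner_self_real: "cinner x x = complex_of_real (Re (cinner x x))"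
  using cinner_self_Im by (simp add: complex_eq_iff)
lemma cinner_self_nonneg: "Re (cinner x x) \<ge> 0"
  by (cases "x = 0") (auto dest: cinner_pos[of x])
lemma cinner_self_eq_0: "cinner x x = 0 \<longleftrightarrow> x = 0"
  using cinner_pos[of x] by (cases "x = 0") auto
lemma hnorm_sq: "(hnorm x)\<^sup>2 = Re (cinner x x)"
  by (simp add: norm_cinner cinner_self_nonneg)
lemma hnorm_nonneg: "hnorm x \<ge> 0"
  by (simp add: norm_cinner cinner_self_nonneg)
lemma hnorm_zero[simp]: "hnorm 0 = 0"
  by (simp add: norm_cinner)
lemma hnorm_eq_0: "hnorm x = 0 \<longleftrightarrow> x = 0"
  by (metis cinner_pos hnorm_zero less_irrefl norm_cinner real_sqrt_eq_zero_cancel_iff)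
lemma hnorm_scaleC: "hnorm (a *\<^sub>C x) = cmod a * hnorm x"
proof -
  have q: "a * cnj a = complex_of_real ((cmod a)^2)" using complex_norm_square[of a] by simp
  have "cinner (a *\<^sub>C x) (a *\<^sub>C x) = (a * cnj a) * cinner x x"
    by (simp add: cinner_scaleC_left cinner_scaleC_right mult.assoc)
  then have "Re (cinner (a *\<^sub>C x) (a *\<^sub>C x)) = (cmod a)\<^sup>2 * Re (cinner x x)"
    by (simp add: q)
  then show ?thesis by (simp add: norm_cinner real_sqrt_mult)
qed
end

lemma cauchy_schwarz: "cmod (cinner x y) \<le> hnorm x * hnorm y"
proof (cases "y = 0")
  case True then show ?thesis by simp
next
  case False
  define r where "r = Re (cinner y y)"
  have r1: "cinner y y = complex_of_real r"
    unfolding r_def by (rule cinner_self_real)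
  have r2: "r > 0" using False cinner_pos[of y] r_def by auto
  note r = r1 r2
  define t where "t = cinner x y / complex_of_real r"
  have "0 \<le> Re (cinner (x - t *\<^sub>C y) (x - t *\<^sub>C y))" by (rule cinner_self_nonneg)
  also have "cinner (x - t *\<^sub>C y) (x - t *\<^sub>C y) = cinner x x - cnj t * cinner x y - t * cinner y x + t * cnj t * complex_of_real r"
    by (simp add: cinner_diff_left cinner_diff_right cinner_scaleC_left cinner_scaleC_right r algebra_simps)
  also have "\<dots> = cinner x x - complex_of_real ((cmod (cinner x y))\<^sup>2 / r)"
  proof -
    have ct: "cnj t = cnj (cinner x y) / complex_of_real r" using t_def by simp
    have q: "cinner x y * cnj (cinner x y) = complex_of_real ((cmod (cinner x y))\<^sup>2)"
      using complex_norm_square[of "cinner x y"] by simp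
    have "cinner x x - cnj t * cinner x y - t * cnj (cinner x y) + t * cnj t * complex_of_real r
       = cinner x x - (cinner x y * cnj (cinner x y)) / complex_of_real r"
      using r unfolding ct t_def by (simp add: field_simps)
    then show ?thesis by (subst cinner_conj_sym[of y x]) (simp add: q)
  qed
  finally have "(cmod (cinner x y))\<^sup>2 / r \<le> Re (cinner x x)"
    by simp
  then have "cmod (cinner x y) ^2 \<le> Re (cinner x x) * Re (cinner y y)"
    using r(2) unfolding r_def[symmetric] by (simp add: divide_le_eq mult.commute)
  then have "cmod (cinner x y) ^2 \<le> (hnorm x * hnorm y)^2"
    by (simp add: power_mult_distrib hnorm_sq)
  then show ?thesis
    by (rule power2_le_imp_le) (simp add: hnorm_nonneg)
qed

lemma hnorm_triangle: "hnorm (x + y) \<le> hnorm x + hnorm y"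
proof -
  have "Re (cinner (x+y) (x+y)) = Re (cinner x x) + Re (cinner y y) + Re (cinner x y) + Re (cinner y x)"
    by (simp add: cinner_add_left cinner_add_right)
  also have "\<dots> \<le> Re (cinner x x) + Re (cinner y y) + 2 * (hnorm x * hnorm y)"
    using cauchy_schwarz[of x y] cauchy_schwarz[of y x] abs_Re_le_cmod[of "cinner x y"] abs_Re_le_cmod[of "cinner y x"]
    by (simp add: mult.commute)
  finally have "(hnorm (x+y))\<^sup>2 \<le> (hnorm x + hnorm y)\<^sup>2"
    by (simp add: hnorm_sq power2_sum)
  then show ?thesis
    by (rule power2_le_imp_le) (simp add: hnorm_nonneg add_nonneg_nonneg)
qed

lemma hnorm_sum: "hnorm (\<Sum>i\<in>A. f i) \<le> (\<Sum>i\<in>A. hnorm (f i))"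
  by (induction A rule: infinite_finite_induct) (auto intro: order_trans[OF hnorm_triangle])




definition orthonormal :: "'a::hermitian_space set \<Rightarrow> bool" where
  "orthonormal E \<longleftrightarrow> (\<forall>e\<in>E. \<forall>e'\<in>E. cinner e e' = (if e = e' then 1 else 0))"

lemma orthonormal_subset: "orthonormal E \<Longrightarrow> F \<subseteq> E \<Longrightarrow> orthonormal F"
  unfolding orthonormal_def by blast

lemma orth_coeff:
  assumes "finite E" "orthonormal E" "e' \<in> E"
  shows "cinner (\<Sum>e\<in>E. u e *\<^sub>C e) e' = u e'"
proof -
  have "cinner (\<Sum>e\<in>E. u e *\<^sub>C e) e' = (\<Sum>e\<in>E. u e * cinner e e')"
    by (simp add: cinner_sum_left cinner_scaleC_left)
  also have "\<dots> = (\<Sum>e\<in>E. if e = e' then u e else 0)"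
    using assms(2,3) unfolding orthonormal_def by (intro sum.cong) auto
  also have "\<dots> = u e'" using assms(1,3) by simp
  finally show ?thesis .
qed

lemma orth_expansion:
  assumes "finite E" "orthonormal E" "v \<in> cv.span E"
  shows "v = (\<Sum>e\<in>E. cinner v e *\<^sub>C e)"
proof -
  obtain u where u: "v = (\<Sum>e\<in>E. u e *\<^sub>C e)"
    using assms(3) unfolding cv.span_finite[OF assms(1)] by auto
  have "cinner v e = u e" if "e \<in> E" for e
    using orth_coeff[OF assms(1,2) that] u by simp
  then show ?thesis using u by (auto intro: sum.cong)
qed

lemma cnj_mult_self: "cnj c * c = complex_of_real ((cmod c)\<^sup>2)"
  using complex_norm_square[of c] by (simp add: mult.commute)

lemma orth_parseval:
  assumes "finite E" "orthonormal E" "v \<in> cv.span E"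
  shows "Re (cinner v v) = (\<Sum>e\<in>E. (cmod (cinner v e))\<^sup>2)"
proof -
  have "cinner v v = cinner v (\<Sum>e\<in>E. cinner v e *\<^sub>C e)"
    using orth_expansion[OF assms] by simp
  also have "\<dots> = (\<Sum>e\<in>E. cnj (cinner v e) * cinner v e)"
    by (simp add: cinner_sum_right cinner_scaleC_right)
  also have "\<dots> = (\<Sum>e\<in>E. complex_of_real ((cmod (cinner v e))\<^sup>2))"
    by (simp add: cnj_mult_self)
  finally show ?thesis by (simp add: Re_sum)
qed

lemma orth_independent:
  assumes "finite E" "orthonormal E"
  shows "\<not> cv.dependent E"
  unfolding cv.dependent_explicit
proof clarify
  fix t u v assume t: "finite t" "t \<subseteq> E" "(\<Sum>v\<in>t. u v *\<^sub>C v) = 0" "v \<in> t" "u v \<noteq> 0"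
  have "cinner (\<Sum>v\<in>t. u v *\<^sub>C v) v = u v"
    using orth_coeff[OF t(1) orthonormal_subset[OF assms(2) t(2)] t(4)] .
  with t show False by simp
qed

lemma gram_schmidt:
  assumes "finite (F :: 'a::hermitian_space set)"
  shows "\<exists>E. finite E \<and> orthonormal E \<and> cv.span E = cv.span F \<and> card E \<le> card F"
  using assms
proof (induction F rule: finite_induct)
  case empty
  then show ?case by (intro exI[of _ "{}"]) (auto simp: orthonormal_def)
next
  case (insert x F)
  then obtain E where E: "finite E" "orthonormal E" "cv.span E = cv.span F" "card E \<le> card F"
    by blast
  define w where "w = x - (\<Sum>e\<in>E. cinner x e *\<^sub>C e)"
  have sE: "(\<Sum>e\<in>E. cinner x e *\<^sub>C e) \<in> cv.span E"
    by (intro cv.span_sum cv.span_scale cv.span_base)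
  show ?case
  proof (cases "w = 0")
    case True
    then have "x \<in> cv.span F" using sE E(3) unfolding w_def by simp
    then have "cv.span (insert x F) = cv.span F"
      unfolding cv.span_eq by (auto intro: cv.span_base cv.span_mono[THEN subsetD, of F "insert x F"])
    with E insert show ?thesis by (intro exI[of _ E]) (auto simp: card_insert_if)
  next
    case False
    define n where "n = complex_of_real (1 / hnorm w) *\<^sub>C w"
    have hw: "hnorm w > 0" using False hnorm_eq_0 hnorm_nonneg by (metis order_le_less)
    have wE: "cinner w e = 0" if "e \<in> E" for e
    proof -
      have "cinner (\<Sum>e\<in>E. cinner x e *\<^sub>C e) e = cinner x e"
        by (rule orth_coeff[OF E(1,2) that])
      then show ?thesis unfolding w_def by (simp add: cinner_diff_left)
    qed
    have nE: "cinner n e = 0" if "e \<in> E" for e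
      using wE[OF that] by (simp add: n_def cinner_scaleC_left)
    have nn: "cinner n n = 1"
    proof -
      have c1: "cinner n n = complex_of_real (1 / hnorm w) * complex_of_real (1 / hnorm w) * cinner w w"
        by (simp add: n_def cinner_scaleC_left cinner_scaleC_right)
      have c2: "cinner w w = complex_of_real ((hnorm w)\<^sup>2)"
        by (simp add: hnorm_sq cinner_self_real[symmetric])
      have c3: "(1 / hnorm w) * (1 / hnorm w) * (hnorm w)\<^sup>2 = 1"
        using hw by (simp add: power2_eq_square)
      have "cinner n n = complex_of_real ((1 / hnorm w) * (1 / hnorm w) * (hnorm w)\<^sup>2)"
        unfolding c1 c2 of_real_mult ..
      then show ?thesis unfolding c3 by simp
    qed
    have nnotin: "n \<notin> E"
    proof
      assume "n \<in> E"
      then have "cinner n n = 0" by (rule nE)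
      with nn show False by simp
    qed
    have orth: "orthonormal (insert n E)"
      unfolding orthonormal_def
    proof (intro ballI)
      fix a b assume a: "a \<in> insert n E" and b: "b \<in> insert n E"
      have en: "cinner e n = 0" if "e \<in> E" for e
        using nE[OF that] cinner_conj_sym[of e n] by simp
      show "cinner a b = (if a = b then 1 else 0)"
        using a b nnotin
      proof (elim insertE)
        assume "a = n" "b = n" then show ?thesis using nn by simp
      next
        assume "a = n" "b \<in> E" then show ?thesis using nE nnotin by auto
      next
        assume "a \<in> E" "b = n" then show ?thesis using en nnotin by auto
      next
        assume "a \<in> E" "b \<in> E" then show ?thesis using E(2) unfolding orthonormal_def by blast
      qed
    qed
    have xw: "x = complex_of_real (hnorm w) *\<^sub>C n + (\<Sum>e\<in>E. cinner x e *\<^sub>C e)"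
      using hw by (simp add: n_def w_def)
    have sp: "cv.span (insert n E) = cv.span (insert x F)"
      unfolding cv.span_eq
    proof
      have "E \<subseteq> cv.span (insert x F)"
        using E(3) cv.span_superset[of E] cv.span_mono[of F "insert x F"] by blast
      moreover have "n \<in> cv.span (insert x F)"
      proof -
        have "(\<Sum>e\<in>E. cinner x e *\<^sub>C e) \<in> cv.span (insert x F)"
          using sE E(3) cv.span_mono[of F "insert x F"] by blast
        then have "w \<in> cv.span (insert x F)"
          unfolding w_def by (rule cv.span_diff[OF cv.span_base[OF insertI1]])
        then show ?thesis unfolding n_def by (rule cv.span_scale)
      qed
      ultimately show "insert n E \<subseteq> cv.span (insert x F)" by blast
    next
      have "F \<subseteq> cv.span (insert n E)"
        using E(3) cv.span_superset[of F] cv.span_mono[of E "insert n E"] by blast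
      moreover have "x \<in> cv.span (insert n E)"
      proof -
        have "(\<Sum>e\<in>E. cinner x e *\<^sub>C e) \<in> cv.span (insert n E)"
          using sE cv.span_mono[of E "insert n E"] by blast
        then show ?thesis
          by (subst xw) (rule cv.span_add[OF cv.span_scale[OF cv.span_base[OF insertI1]]])
      qed
      ultimately show "insert x F \<subseteq> cv.span (insert n E)" by blast
    qed
    show ?thesis
      using E insert nnotin orth sp by (intro exI[of _ "insert n E"]) auto
  qed
qed




lemma exists_orthonormal_basis:
  assumes "cfinite_dim (UNIV :: 'a::hermitian_space set)"
  shows "\<exists>E :: 'a set. corthonormal_basis E"
proof -
  obtain F :: "'a set" where F: "finite F" "UNIV \<subseteq> cspan F"
    using assms unfolding cfinite_dim_def by blast
  obtain E where E: "finite E" "orthonormal E" "cv.span E = cv.span F"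
    using gram_schmidt[OF F(1)] by blast
  have "cspan E = UNIV" using F(2) E(3) by (auto simp: cspan_eq)
  then show ?thesis using E unfolding corthonormal_basis_def orthonormal_def by blast
qed

lemma onb_props:
  assumes "corthonormal_basis E"
  shows "finite E" "orthonormal E" "cv.span E = UNIV" "cbasis E"
proof -
  show f: "finite E" and o: "orthonormal E" and s: "cv.span E = UNIV"
    using assms unfolding corthonormal_basis_def orthonormal_def cspan_eq by auto
  show "cbasis E" unfolding cbasis_def cindependent_eq cspan_eq
    using f o s orth_independent by blast
qed

lemma cbasis_props:
  assumes "cbasis B"
  shows "finite B" "\<not> cv.dependent B" "cv.span B = UNIV"
  using assms unfolding cbasis_def cindependent_eq cspan_eq by auto

lemma dual_unique:
  assumes B: "cbasis B" and b: "b \<in> B" and x: "x = (\<Sum>v\<in>B. u v *\<^sub>C v)"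
  shows "dual_elem B b x = u b"
proof -
  have fin: "finite B" and ind: "\<not> cv.dependent B" using cbasis_props[OF B] by auto
  let ?P = "\<lambda>c. c \<in> B \<rightarrow>\<^sub>E UNIV \<and> x = (\<Sum>v\<in>B. c v *\<^sub>C v)"
  have P: "?P (restrict u B)"
    using x by (auto intro: sum.cong)
  have uniq: "c = restrict u B" if "?P c" for c
  proof (rule PiE_ext)
    show "c \<in> B \<rightarrow>\<^sub>E UNIV" using that by blast
    show "restrict u B \<in> B \<rightarrow>\<^sub>E UNIV" by simp
    fix i assume i: "i \<in> B"
    have "(\<Sum>v\<in>B. (c v - u v) *\<^sub>C v) = (\<Sum>v\<in>B. c v *\<^sub>C v) - (\<Sum>v\<in>B. u v *\<^sub>C v)"
      by (simp add: cv.scale_left_diff_distrib sum_subtractf)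
    also have "\<dots> = 0" using that x by simp
    finally have "c i - u i = 0"
      using cv.independentD[OF ind fin order_refl _ i, of "\<lambda>v. c v - u v"] by simp
    then show "c i = restrict u B i" using i by simp
  qed
  have "(THE c. ?P c) = restrict u B"
    using P uniq by (rule the_equality)
  then show ?thesis unfolding dual_elem_def using b by simp
qed

lemma dual_expansion:
  assumes B: "cbasis B"
  shows "x = (\<Sum>b\<in>B. dual_elem B b x *\<^sub>C b)"
proof -
  obtain u where u: "x = (\<Sum>v\<in>B. u v *\<^sub>C v)"
    using cbasis_props(3)[OF B] unfolding cv.span_finite[OF cbasis_props(1)[OF B]] by auto
  have "dual_elem B b x = u b" if "b \<in> B" for b using dual_unique[OF B that u] .
  then show ?thesis using u by (auto intro: sum.cong)
qed

lemma dual_functional: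
  assumes B: "cbasis B" and b: "b \<in> B"
  shows "cfunctional (dual_elem B b)"
  unfolding cfunctional_def
proof (intro conjI allI)
  fix x y
  have "x + y = (\<Sum>v\<in>B. (dual_elem B v x + dual_elem B v y) *\<^sub>C v)"
    by (subst dual_expansion[OF B, of x], subst dual_expansion[OF B, of y])
       (simp add: cv.scale_left_distrib sum.distrib)
  then show "dual_elem B b (x + y) = dual_elem B b x + dual_elem B b y"
    by (rule dual_unique[OF B b])
next
  fix a x
  have "a *\<^sub>C x = (\<Sum>v\<in>B. (a * dual_elem B v x) *\<^sub>C v)"
    by (subst dual_expansion[OF B, of x]) (simp add: cv.scale_sum_right)
  then show "dual_elem B b (a *\<^sub>C x) = a * dual_elem B b x"
    by (rule dual_unique[OF B b])
qed




lemma clinear_zero: "clinear D \<Longrightarrow> D 0 = 0"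
  unfolding clinear_def by (metis cv.scale_zero_left)

lemma clinear_sum: "clinear D \<Longrightarrow> D (\<Sum>i\<in>S. f i) = (\<Sum>i\<in>S. D (f i))"
  by (induction S rule: infinite_finite_induct) (auto simp: clinear_zero, simp add: clinear_def)

lemma clinear_scale: "clinear D \<Longrightarrow> D (a *\<^sub>C x) = a *\<^sub>C D x"
  unfolding clinear_def by blast

lemma cfunctional_zero: "cfunctional (\<lambda>x. 0)"
  unfolding cfunctional_def by simp

lemma cfunctional_scale: "cfunctional \<alpha> \<Longrightarrow> cfunctional (\<lambda>x. c * \<alpha> x)"
  unfolding cfunctional_def by (simp add: algebra_simps)

lemma cfunctional_add: "cfunctional \<alpha> \<Longrightarrow> cfunctional \<beta> \<Longrightarrow> cfunctional (\<lambda>x. \<alpha> x + \<beta> x)"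
  unfolding cfunctional_def by (simp add: algebra_simps)

lemma cfunctional_sum: "(\<And>i. i \<in> S \<Longrightarrow> cfunctional (f i)) \<Longrightarrow> cfunctional (\<lambda>x. \<Sum>i\<in>S. f i x)"
  by (induction S rule: infinite_finite_induct) (auto simp: cfunctional_zero intro: cfunctional_add)

lemma cfunctional_zero_val: "cfunctional \<alpha> \<Longrightarrow> \<alpha> 0 = 0"
  unfolding cfunctional_def by (metis cv.scale_zero_left mult_zero_left)

lemma cfunctional_inner: "clinear D \<Longrightarrow> cfunctional (\<lambda>x. cinner (D x) e)"
  unfolding cfunctional_def clinear_def by (simp add: cinner_add_left cinner_scaleC_left)

context
  fixes \<rho> :: "'v::hermitian_space \<Rightarrow> ('u::hermitian_space \<Rightarrow> complex) \<Rightarrow> 'w::hermitian_space"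
  assumes bil: "cbilinear \<rho>"
begin

lemma rho_lin1: "cfunctional \<alpha> \<Longrightarrow> clinear (\<lambda>v. \<rho> v \<alpha>)"
  using bil unfolding cbilinear_def by blast

lemma rho_sum1:
  assumes a: "cfunctional \<alpha>"
  shows "\<rho> (\<Sum>i\<in>S. c i *\<^sub>C v i) \<alpha> = (\<Sum>i\<in>S. c i *\<^sub>C \<rho> (v i) \<alpha>)"
proof -
  have l: "clinear (\<lambda>v. \<rho> v \<alpha>)" by (rule rho_lin1[OF a])
  show ?thesis
  proof (induction S rule: infinite_finite_induct)
    case (infinite S) then show ?case using clinear_zero[OF l] by simp
  next
    case empty then show ?case using clinear_zero[OF l] by simp
  next
    case (insert i S)
    have "\<rho> (\<Sum>j\<in>insert i S. c j *\<^sub>C v j) \<alpha> = \<rho> (c i *\<^sub>C v i + (\<Sum>j\<in>S. c j *\<^sub>C v j)) \<alpha>"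
      using insert(1,2) by simp
    also have "\<dots> = c i *\<^sub>C \<rho> (v i) \<alpha> + \<rho> (\<Sum>j\<in>S. c j *\<^sub>C v j) \<alpha>"
      using l unfolding clinear_def by simp
    finally show ?case using insert by simp
  qed
qed

lemma rho_add2: "cfunctional \<alpha> \<Longrightarrow> cfunctional \<beta> \<Longrightarrow> \<rho> v (\<lambda>x. \<alpha> x + \<beta> x) = \<rho> v \<alpha> + \<rho> v \<beta>"
  using bil unfolding cbilinear_def by blast

lemma rho_scale2: "cfunctional \<alpha> \<Longrightarrow> \<rho> v (\<lambda>x. a * \<alpha> x) = a *\<^sub>C \<rho> v \<alpha>"
  using bil unfolding cbilinear_def by blast

lemma rho_zero2: "\<rho> v (\<lambda>x. 0) = 0"
  using rho_scale2[OF cfunctional_zero, of v 0] by simp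

lemma rho_sum2:
  "(\<And>i. i \<in> S \<Longrightarrow> cfunctional (f i)) \<Longrightarrow> \<rho> v (\<lambda>x. \<Sum>i\<in>S. f i x) = (\<Sum>i\<in>S. \<rho> v (f i))"
proof (induction S rule: infinite_finite_induct)
  case (infinite S) then show ?case by (simp add: rho_zero2)
next
  case empty then show ?case by (simp add: rho_zero2)
next
  case (insert i S)
  have "\<rho> v (\<lambda>x. \<Sum>j\<in>insert i S. f j x) = \<rho> v (\<lambda>x. f i x + (\<Sum>j\<in>S. f j x))"
    using insert(1,2) by simp
  also have "\<dots> = \<rho> v (f i) + \<rho> v (\<lambda>x. \<Sum>j\<in>S. f j x)"
    using rho_add2[of "f i" "\<lambda>x. \<Sum>j\<in>S. f j x" v] insert(4) cfunctional_sum[of S f] by auto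
  finally show ?case using insert by simp
qed

lemma rho_zero_if: "(\<And>x. \<alpha> x = 0) \<Longrightarrow> \<rho> v \<alpha> = 0"
proof -
  assume "\<And>x. \<alpha> x = 0"
  then have "\<alpha> = (\<lambda>x. 0)" by auto
  then show ?thesis by (simp add: rho_zero2)
qed

lemma rho_bound:
  assumes v: "hnorm v = 1" and a: "cfunctional \<alpha>" and fin: "dual_norm \<alpha> \<le> ennreal s"
  shows "ennreal (hnorm (\<rho> v \<alpha>)) \<le> rho_norm \<rho> * dual_norm \<alpha>"
proof (cases "dual_norm \<alpha>")
  case top then show ?thesis using fin by (simp add: top_unique)
next
  case (real d)
  show ?thesis
  proof (cases "d = 0")
    case True
    have au: "\<alpha> u = 0" if "hnorm u = 1" for u
    proof -
      have "ennreal (cmod (\<alpha> u)) \<le> dual_norm \<alpha>"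
        unfolding dual_norm_def using that by (intro SUP_upper) auto
      then show ?thesis using real True by (simp add: ennreal_eq_0_iff)
    qed
    have "\<alpha> x = 0" for x
    proof (cases "x = 0")
      case True then show ?thesis using cfunctional_zero_val[OF a] by simp
    next
      case False
      then have hx: "hnorm x > 0" using hnorm_eq_0 hnorm_nonneg by (metis order_le_less)
      define u where "u = complex_of_real (1 / hnorm x) *\<^sub>C x"
      have "hnorm u = 1" using hx by (simp add: u_def hnorm_scaleC norm_divide)
      then have "\<alpha> u = 0" by (rule au)
      moreover have "x = complex_of_real (hnorm x) *\<^sub>C u"
        using hx by (simp add: u_def)
      ultimately show ?thesis using a unfolding cfunctional_def by (metis mult_zero_right)
    qed
    then have "\<rho> v \<alpha> = 0" by (rule rho_zero_if)
    then show ?thesis by simp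
  next
    case False
    then have d: "d > 0" using real by simp
    define \<beta> where "\<beta> = (\<lambda>x. complex_of_real (1 / d) * \<alpha> x)"
    have b: "cfunctional \<beta>" unfolding \<beta>_def by (rule cfunctional_scale[OF a])
    have "dual_norm \<beta> = ennreal (1 / d) * dual_norm \<alpha>"
      unfolding dual_norm_def \<beta>_def SUP_mult_left_ennreal
    proof (intro SUP_cong refl)
      fix x :: 'u
      have "cmod (complex_of_real (1 / d) * \<alpha> x) = (1/d) * cmod (\<alpha> x)"
        using d by (simp add: norm_mult norm_divide)
      then show "ennreal (cmod (complex_of_real (1 / d) * \<alpha> x)) = ennreal (1 / d) * ennreal (cmod (\<alpha> x))"
        unfolding ennreal_mult[OF less_imp_le[OF divide_pos_pos[OF zero_less_one d]] norm_ge_zero, symmetric]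
        by (rule arg_cong[where f=ennreal])
    qed
    also have "\<dots> = 1" using real d by (simp add: ennreal_mult[symmetric])
    finally have b1: "dual_norm \<beta> = 1" .
    have r: "ennreal (hnorm (\<rho> v \<beta>)) \<le> rho_norm \<rho>"
    proof -
      have mem: "(v, \<beta>) \<in> {(v, \<alpha>). hnorm v = 1 \<and> cfunctional \<alpha> \<and> dual_norm \<alpha> = 1}"
        using v b b1 by simp
      show ?thesis
        using SUP_upper[OF mem, of "\<lambda>p. ennreal (hnorm (\<rho> (fst p) (snd p)))"]
        unfolding rho_norm_def by simp
    qed
    have "\<alpha> = (\<lambda>x. complex_of_real d * \<beta> x)" using d by (auto simp: \<beta>_def)
    then have "\<rho> v \<alpha> = complex_of_real d *\<^sub>C \<rho> v \<beta>" using rho_scale2[OF b] by simp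
    then have "hnorm (\<rho> v \<alpha>) = d * hnorm (\<rho> v \<beta>)" using d by (simp add: hnorm_scaleC)
    then have "ennreal (hnorm (\<rho> v \<alpha>)) = ennreal d * ennreal (hnorm (\<rho> v \<beta>))"
      using d by (simp add: ennreal_mult[OF less_imp_le[OF d] hnorm_nonneg])
    also have "\<dots> \<le> ennreal d * rho_norm \<rho>" using r by (rule mult_left_mono) simp
    finally show ?thesis using real by (simp add: mult.commute)
  qed
qed

end

lemma dual_norm_bound:
  assumes Ob: "corthonormal_basis Ob" and D: "clinear D"
  shows "dual_norm (\<lambda>x. cinner (D x) e) \<le> ennreal (sqrt (\<Sum>q\<in>Ob. (cmod (cinner (D q) e))\<^sup>2))"
  unfolding dual_norm_def
proof (rule SUP_least)
  fix u :: 'a assume "u \<in> {u. hnorm u = 1}"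
  then have u1: "hnorm u = 1" by simp
  note Op = onb_props[OF Ob]
  have ue: "u = (\<Sum>q\<in>Ob. cinner u q *\<^sub>C q)"
    using orth_expansion[OF Op(1,2)] Op(3) by simp
  have "cinner (D u) e = (\<Sum>q\<in>Ob. cinner u q * cinner (D q) e)"
    by (subst ue) (simp add: clinear_sum[OF D] clinear_scale[OF D] cinner_sum_left cinner_scaleC_left)
  then have "cmod (cinner (D u) e) \<le> (\<Sum>q\<in>Ob. \<bar>cmod (cinner u q)\<bar> * \<bar>cmod (cinner (D q) e)\<bar>)"
    by (auto intro: order_trans[OF norm_sum] simp: norm_mult)
  also have "\<dots> \<le> L2_set (\<lambda>q. cmod (cinner u q)) Ob * L2_set (\<lambda>q. cmod (cinner (D q) e)) Ob"
    by (rule L2_set_mult_ineq)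
  also have "L2_set (\<lambda>q. cmod (cinner u q)) Ob = 1"
    unfolding L2_set_def using orth_parseval[OF Op(1,2), of u] Op(3) u1 hnorm_sq[of u] by simp
  finally show "ennreal (cmod (cinner (D u) e)) \<le> ennreal (sqrt (\<Sum>q\<in>Ob. (cmod (cinner (D q) e))\<^sup>2))"
    unfolding L2_set_def by (intro ennreal_leI) simp
qed




theorem lemma2p2:
  fixes D :: "'u::hermitian_space \<Rightarrow> 'v::hermitian_space"
    and \<rho> :: "'v \<Rightarrow> ('u \<Rightarrow> complex) \<Rightarrow> 'w::hermitian_space"
  assumes "cfinite_dim (UNIV :: 'u set)"
    and "clinear D"
    and "cbilinear \<rho>"
  shows "ennreal (hnorm (rho_trace \<rho> D))
           \<le> ennreal (sqrt (real (crank D))) * rho_norm \<rho> * ennreal (hs_norm D)"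
proof -
  note lin = assms(2) and bil = assms(3)
  define Ob where "Ob = (SOME B::'u set. corthonormal_basis B)"
  have Ob: "corthonormal_basis Ob"
    using exists_orthonormal_basis[OF assms(1)] unfolding Ob_def by (rule someI_ex)
  note Op = onb_props[OF Ob]
  define B where "B = (SOME B::'u set. cbasis B)"
  have B: "cbasis B" unfolding B_def using Op(4) by (rule someI)
  have Bfin: "finite B" using cbasis_props[OF B] by simp
  have ex: "\<exists>F. finite F \<and> card F = card (D ` Ob) \<and> range D \<subseteq> cspan F"
  proof (intro exI conjI)
    show "finite (D ` Ob)" using Op(1) by simp
    show "card (D ` Ob) = card (D ` Ob)" ..
    show "range D \<subseteq> cspan (D ` Ob)"
    proof
      fix y assume "y \<in> range D"
      then obtain x where x: "y = D x" by blast
      have "x = (\<Sum>q\<in>Ob. cinner x q *\<^sub>C q)"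
        using orth_expansion[OF Op(1,2)] Op(3) by simp
      then have "y = (\<Sum>q\<in>Ob. cinner x q *\<^sub>C D q)"
        using x by (metis (no_types, lifting) clinear_scale clinear_sum lin sum.cong)
      also have "\<dots> \<in> cv.span (D ` Ob)"
        by (intro cv.span_sum cv.span_scale cv.span_base) auto
      finally show "y \<in> cspan (D ` Ob)" by (simp add: cspan_eq)
    qed
  qed
  have "\<exists>F. finite F \<and> card F = crank D \<and> range D \<subseteq> cspan F"
    unfolding crank_def cdim_def by (rule LeastI_ex) (use ex in blast)
  then obtain F where F: "finite F" "card F = crank D" "range D \<subseteq> cv.span F"
    by (auto simp: cspan_eq)
  obtain E where E: "finite E" "orthonormal E" "cv.span E = cv.span F" "card E \<le> card F"
    using gram_schmidt[OF F(1)] by blast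
  have rE: "D x \<in> cv.span E" for x using F(3) E(3) by auto
  have eunit: "hnorm e = 1" if "e \<in> E" for e
    using E(2) that unfolding orthonormal_def by (simp add: norm_cinner)
  define \<psi> where "\<psi> e = (\<lambda>x. cinner (D x) e)" for e
  define s where "s e = sqrt (\<Sum>q\<in>Ob. (cmod (cinner (D q) e))\<^sup>2)" for e
  have s0: "s e \<ge> 0" for e unfolding s_def by (simp add: sum_nonneg)
  have tr: "rho_trace \<rho> D = (\<Sum>e\<in>E. \<rho> e (\<psi> e))"
  proof -
    have "rho_trace \<rho> D = (\<Sum>b\<in>B. \<rho> (D b) (dual_elem B b))"
      unfolding rho_trace_def Let_def B_def ..
    also have "\<dots> = (\<Sum>b\<in>B. \<Sum>e\<in>E. \<rho> e (\<lambda>x. cinner (D b) e * dual_elem B b x))"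
    proof (rule sum.cong[OF refl])
      fix b assume b: "b \<in> B"
      have fb: "cfunctional (dual_elem B b)" by (rule dual_functional[OF B b])
      have "\<rho> (D b) (dual_elem B b) = \<rho> (\<Sum>e\<in>E. cinner (D b) e *\<^sub>C e) (dual_elem B b)"
        using orth_expansion[OF E(1,2) rE[of b]] by simp
      also have "\<dots> = (\<Sum>e\<in>E. cinner (D b) e *\<^sub>C \<rho> e (dual_elem B b))"
        by (rule rho_sum1[OF bil fb])
      also have "\<dots> = (\<Sum>e\<in>E. \<rho> e (\<lambda>x. cinner (D b) e * dual_elem B b x))"
        using rho_scale2[OF bil fb] by simp
      finally show "\<rho> (D b) (dual_elem B b) = (\<Sum>e\<in>E. \<rho> e (\<lambda>x. cinner (D b) e * dual_elem B b x))" .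
    qed
    also have "\<dots> = (\<Sum>e\<in>E. \<Sum>b\<in>B. \<rho> e (\<lambda>x. cinner (D b) e * dual_elem B b x))"
      by (rule sum.swap)
    also have "\<dots> = (\<Sum>e\<in>E. \<rho> e (\<lambda>x. \<Sum>b\<in>B. cinner (D b) e * dual_elem B b x))"
    proof (rule sum.cong[OF refl])
      fix e
      show "(\<Sum>b\<in>B. \<rho> e (\<lambda>x. cinner (D b) e * dual_elem B b x)) =
            \<rho> e (\<lambda>x. \<Sum>b\<in>B. cinner (D b) e * dual_elem B b x)"
        by (rule rho_sum2[OF bil, symmetric]) (rule cfunctional_scale[OF dual_functional[OF B]])
    qed
    also have "\<dots> = (\<Sum>e\<in>E. \<rho> e (\<psi> e))"
    proof (rule sum.cong[OF refl])
      fix e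
      have "(\<lambda>x. \<Sum>b\<in>B. cinner (D b) e * dual_elem B b x) = \<psi> e"
      proof
        fix x
        have "D x = D (\<Sum>b\<in>B. dual_elem B b x *\<^sub>C b)"
          using dual_expansion[OF B, of x] by simp
        also have "\<dots> = (\<Sum>b\<in>B. dual_elem B b x *\<^sub>C D b)"
          by (simp add: clinear_sum[OF lin] clinear_scale[OF lin])
        finally have "cinner (D x) e = (\<Sum>b\<in>B. dual_elem B b x * cinner (D b) e)"
          by (simp add: cinner_sum_left cinner_scaleC_left)
        then show "(\<Sum>b\<in>B. cinner (D b) e * dual_elem B b x) = \<psi> e x"
          unfolding \<psi>_def by (simp add: mult.commute)
      qed
      then show "\<rho> e (\<lambda>x. \<Sum>b\<in>B. cinner (D b) e * dual_elem B b x) = \<rho> e (\<psi> e)" by simp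
    qed
    finally show ?thesis .
  qed
  have hs: "hs_norm D = sqrt (\<Sum>q\<in>Ob. (hnorm (D q))\<^sup>2)"
    unfolding hs_norm_def Let_def Ob_def ..
  have hsnn: "hs_norm D \<ge> 0" unfolding hs by (simp add: sum_nonneg)
  have sumsq: "(\<Sum>e\<in>E. (s e)\<^sup>2) = (\<Sum>q\<in>Ob. (hnorm (D q))\<^sup>2)"
  proof -
    have "(\<Sum>e\<in>E. (s e)\<^sup>2) = (\<Sum>e\<in>E. \<Sum>q\<in>Ob. (cmod (cinner (D q) e))\<^sup>2)"
      unfolding s_def by (intro sum.cong refl) (simp add: sum_nonneg)
    also have "\<dots> = (\<Sum>q\<in>Ob. \<Sum>e\<in>E. (cmod (cinner (D q) e))\<^sup>2)" by (rule sum.swap)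
    also have "\<dots> = (\<Sum>q\<in>Ob. (hnorm (D q))\<^sup>2)"
      by (intro sum.cong refl) (simp add: hnorm_sq orth_parseval[OF E(1,2) rE])
    finally show ?thesis .
  qed
  have sbound: "(\<Sum>e\<in>E. s e) \<le> sqrt (real (crank D)) * hs_norm D"
  proof -
    have "(\<Sum>e\<in>E. s e) = (\<Sum>e\<in>E. \<bar>(\<lambda>_. 1::real) e\<bar> * \<bar>s e\<bar>)" using s0 by simp
    also have "\<dots> \<le> L2_set (\<lambda>_. 1::real) E * L2_set s E" by (rule L2_set_mult_ineq)
    also have "L2_set (\<lambda>_. 1::real) E = sqrt (real (card E))" unfolding L2_set_def by simp
    also have "L2_set s E = hs_norm D" unfolding L2_set_def hs sumsq ..
    finally have 1: "(\<Sum>e\<in>E. s e) \<le> sqrt (real (card E)) * hs_norm D" .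
    have "sqrt (real (card E)) \<le> sqrt (real (crank D))" using E(4) F(2) by simp
    moreover have "hs_norm D \<ge> 0" unfolding hs by (simp add: sum_nonneg)
    ultimately have "sqrt (real (card E)) * hs_norm D \<le> sqrt (real (crank D)) * hs_norm D"
      by (rule mult_right_mono)
    with 1 show ?thesis by linarith
  qed
  have "ennreal (hnorm (rho_trace \<rho> D)) \<le> ennreal (\<Sum>e\<in>E. hnorm (\<rho> e (\<psi> e)))"
    unfolding tr by (rule ennreal_leI) (rule hnorm_sum)
  also have "\<dots> = (\<Sum>e\<in>E. ennreal (hnorm (\<rho> e (\<psi> e))))"
    by (simp add: hnorm_nonneg)
  also have "\<dots> \<le> (\<Sum>e\<in>E. rho_norm \<rho> * ennreal (s e))"
  proof (rule sum_mono)
    fix e assume e: "e \<in> E"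
    have dn: "dual_norm (\<psi> e) \<le> ennreal (s e)"
      unfolding \<psi>_def s_def by (rule dual_norm_bound[OF Ob lin])
    have "ennreal (hnorm (\<rho> e (\<psi> e))) \<le> rho_norm \<rho> * dual_norm (\<psi> e)"
      by (rule rho_bound[OF bil eunit[OF e] _ dn]) (simp add: \<psi>_def cfunctional_inner[OF lin])
    also have "\<dots> \<le> rho_norm \<rho> * ennreal (s e)" using dn by (rule mult_left_mono) simp
    finally show "ennreal (hnorm (\<rho> e (\<psi> e))) \<le> rho_norm \<rho> * ennreal (s e)" .
  qed
  also have "\<dots> = rho_norm \<rho> * ennreal (\<Sum>e\<in>E. s e)"
    by (simp add: sum_distrib_left[symmetric] s0)
  also have "\<dots> \<le> rho_norm \<rho> * ennreal (sqrt (real (crank D)) * hs_norm D)"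
    by (intro mult_left_mono ennreal_leI sbound) simp
  also have "\<dots> = ennreal (sqrt (real (crank D))) * rho_norm \<rho> * ennreal (hs_norm D)"
  proof -
    have m: "ennreal (sqrt (real (crank D)) * hs_norm D) = ennreal (sqrt (real (crank D))) * ennreal (hs_norm D)"
      by (rule ennreal_mult) (simp_all add: hsnn)
    show ?thesis unfolding m by (simp only: ac_simps)
  qed
  finally show ?thesis .
qed


end
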